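(* Let $(G,\cdot)$ be a semigroup, $(G,\curlywedge)$ a semilattice on the same set $G$, and $\xi,\delta\subseteq G\times G$ binary relations. Then the algebraic system $(G,\cdot,\curlywedge,\xi,\delta)$ is isomorphic to some transformative $\cap$-semigroup of transformations $(\Phi,\cdot,\cap,\xi_\Phi,\delta_\Phi)$ if and only if all of the following hold: (1) $\xi$ is left regular (i.e. $(u,v)\in\xi\Rightarrow(xu,xv)\in\xi$ for all $x,u,v\in G$) and contains the semilattice order $\zeta$; (2) $\delta$ is a left ideal of $(G,\cdot)$ (i.e. $(x,y)\in\delta\Rightarrow(ux,y)\in\delta$ for all $x,y,u\in G$); (3) for all $x,y,z,u,v\in G$: $x(y\curlywedge z)=xy\curlywedge xz$; \ $x\leqslant y\wedge u\leqslant v\wedge y\downarrow v\Rightarrow u\downarrow x$; \ $x\downarrow y\Rightarrow (x\curlywedge y)u=xu\curlywedge yu$; (4) for all $x,y\in G$: $x\curlywedge y\in f_\xi(\{x\})\Rightarrow x\leqslant y$; \ $x\curlywedge y\in f_\xi(\{x,y\})\Rightarrow x\downarrow y$; \ $xy\in f_\xi(\{x\})\Rightarrow x\vdash y$.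
   Context: Notation on $G$: $x\leqslant y$ iff $x\curlywedge y=x$ (this is the semilattice order, denoted $\zeta$); $x\downarrow y$ iff $(x,y)\in\xi$; $x\vdash y$ iff $(x,y)\in\delta$. $G^*=G\cup\{e\}$ is the semigroup obtained from $(G,\cdot)$ by adjoining a new identity element $e\notin G$, and one sets by convention $e\leqslant e$, $e\vdash e$, and $x\vdash e$ for all $x\in G$. The formula $a\boxdot b\leqslant c$ abbreviates $a\vdash b\wedge ab\leqslant c$. A subset $H\subseteq G$ is called $f_\xi$-closed if for all $x,y,t\in G^*$ and $z,u,v\in G$: if $u\downarrow v$, $(u\curlywedge v)x\boxdot y\leqslant zt$, $u\in H$ and $vx\in H$, then $z\in H$. For $X\subseteq G$, $f_\xi(X)$ denotes the least $f_\xi$-closed subset of $G$ containing $X$ (the intersection of all $f_\xi$-closed subsets containing $X$). Transformations: for a nonempty set $A$, a transformation of $A$ is a partial map $A\to A$, regarded as a subset of $A\times A$; $\mathrm{pr}_1 f$ is its domain and $\mathrm{pr}_2 f$ its image. For transformations $f,g$, the product $f\cdot g$ is the composite "first $f$, then $g$": $(f\cdot g)(a)=g(f(a))$, defined exactly when $a\in\mathrm{pr}_1 f$ and $f(a)\in\mathrm{pr}_1 g$. A transformative $\cap$-semigroup of transformations is a system $(\Phi,\cdot,\cap,\xi_\Phi,\delta_\Phi)$ where $\Phi$ is a set of transformations of some nonempty set $A$ closed under this product and under set-theoretic intersection of subsets of $A\times A$, $\xi_\Phi=\{(f,g)\in\Phi^2: f$ and $g$ coincide on $\mathrm{pr}_1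 f\cap\mathrm{pr}_1 g\}$ (the semicompatibility relation; i.e. $f$ restricted to $\mathrm{pr}_1 g$ equals $g$ restricted to $\mathrm{pr}_1 f$), and $\delta_\Phi=\{(f,g)\in\Phi^2:\mathrm{pr}_2 f\subseteq\mathrm{pr}_1 g\}$ (the semiadjacency relation). An isomorphism preserves $\cdot$, $\curlywedge\mapsto\cap$, and the two relations in both directions. *)

theory Defs
  imports Main
begin

text \<open>The algebraic system (G, mult, meet, xi, delta) lives on the whole type 'a.
  G* = 'a option, with None playing the adjoined identity e.\<close>

definition sl_le :: "('a \<Rightarrow> 'a \<Rightarrow> 'a) \<Rightarrow> 'a \<Rightarrow> 'a \<Rightarrow> bool" where
  "sl_le meet x y \<longleftrightarrow> meet x y = x"

fun rmul :: "('a \<Rightarrow> 'a \<Rightarrow> 'a) \<Rightarrow> 'a \<Rightarrow> 'a option \<Rightarrow> 'a" where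
  "rmul mult a None = a"
| "rmul mult a (Some b) = mult a b"

fun dstar :: "('a \<times> 'a) set \<Rightarrow> 'a \<Rightarrow> 'a option \<Rightarrow> bool" where
  "dstar delta a None = True"
| "dstar delta a (Some b) = ((a, b) \<in> delta)"

definition f_closed ::
  "('a \<Rightarrow> 'a \<Rightarrow> 'a) \<Rightarrow> ('a \<Rightarrow> 'a \<Rightarrow> 'a) \<Rightarrow> ('a \<times> 'a) set \<Rightarrow> ('a \<times> 'a) set \<Rightarrow> 'a set \<Rightarrow> bool" where
  "f_closed mult meet xi delta H \<longleftrightarrow>
     (\<forall>x y t :: 'a option. \<forall>z u v :: 'a.
        (u, v) \<in> xi
        \<and> dstar delta (rmul mult (meet u v) x) y
        \<and> sl_le meet (rmul mult (rmul mult (meet u v) x) y) (rmul mult z t)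
        \<and> u \<in> H \<and> rmul mult v x \<in> H
        \<longrightarrow> z \<in> H)"

definition f_xi ::
  "('a \<Rightarrow> 'a \<Rightarrow> 'a) \<Rightarrow> ('a \<Rightarrow> 'a \<Rightarrow> 'a) \<Rightarrow> ('a \<times> 'a) set \<Rightarrow> ('a \<times> 'a) set \<Rightarrow> 'a set \<Rightarrow> 'a set" where
  "f_xi mult meet xi delta X = \<Inter>{H. f_closed mult meet xi delta H \<and> X \<subseteq> H}"

text \<open>Transformations (partial maps) of A are functional relations contained in A \<times> A.
  Product f \<cdot> g = f O g (first f, then g).\<close>
definition transformation :: "'b set \<Rightarrow> ('b \<times> 'b) set \<Rightarrow> bool" where
  "transformation A f \<longleftrightarrow> f \<subseteq> A \<times> A \<and> single_valued f"

definition semicompat :: "('b \<times> 'b) set \<Rightarrow> ('b \<times> 'b) set \<Rightarrow> bool" where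
  "semicompat f g \<longleftrightarrow> {p \<in> f. fst p \<in> Domain g} = {p \<in> g. fst p \<in> Domain f}"

definition semiadj :: "('b \<times> 'b) set \<Rightarrow> ('b \<times> 'b) set \<Rightarrow> bool" where
  "semiadj f g \<longleftrightarrow> Range f \<subseteq> Domain g"

definition transf_iso ::
  "('a \<Rightarrow> 'a \<Rightarrow> 'a) \<Rightarrow> ('a \<Rightarrow> 'a \<Rightarrow> 'a) \<Rightarrow> ('a \<times> 'a) set \<Rightarrow> ('a \<times> 'a) set
   \<Rightarrow> 'b set \<Rightarrow> ('b \<times> 'b) set set \<Rightarrow> ('a \<Rightarrow> ('b \<times> 'b) set) \<Rightarrow> bool" where
  "transf_iso mult meet xi delta A Phi h \<longleftrightarrow>
     A \<noteq> {}
     \<and> (\<forall>f \<in> Phi. transformation A f)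
     \<and> (\<forall>f \<in> Phi. \<forall>g \<in> Phi. f O g \<in> Phi)
     \<and> (\<forall>f \<in> Phi. \<forall>g \<in> Phi. f \<inter> g \<in> Phi)
     \<and> bij_betw h UNIV Phi
     \<and> (\<forall>x y. h (mult x y) = h x O h y)
     \<and> (\<forall>x y. h (meet x y) = h x \<inter> h y)
     \<and> (\<forall>x y. (x, y) \<in> xi \<longleftrightarrow> semicompat (h x) (h y))
     \<and> (\<forall>x y. (x, y) \<in> delta \<longleftrightarrow> semiadj (h x) (h y))"

end

theory Submission
  imports Defs
begin


lemma semicompat_sv:
  assumes "single_valued f" "single_valued g"
  shows "semicompat f g \<longleftrightarrow> (\<forall>a b c. (a,b) \<in> f \<longrightarrow> (a,c) \<in> g \<longrightarrow> b = c)"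
proof
  assume s: "semicompat f g"
  show "\<forall>a b c. (a,b) \<in> f \<longrightarrow> (a,c) \<in> g \<longrightarrow> b = c"
  proof (intro allI impI)
    fix a b c assume ab: "(a,b) \<in> f" and ac: "(a,c) \<in> g"
    hence "(a,b) \<in> {p \<in> f. fst p \<in> Domain g}" by auto
    hence "(a,b) \<in> g" using s unfolding semicompat_def by auto
    thus "b = c" using ac assms(2) unfolding single_valued_def by blast
  qed
next
  assume H: "\<forall>a b c. (a,b) \<in> f \<longrightarrow> (a,c) \<in> g \<longrightarrow> b = c"
  show "semicompat f g" unfolding semicompat_def
  proof (intro equalityI subsetI)
    fix p assume "p \<in> {p \<in> f. fst p \<in> Domain g}"
    then obtain a b c where "p = (a,b)" "(a,b) \<in> f" "(a,c) \<in> g" by (cases p) auto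
    thus "p \<in> {p \<in> g. fst p \<in> Domain f}" using H by auto
  next
    fix p assume "p \<in> {p \<in> g. fst p \<in> Domain f}"
    then obtain a b c where "p = (a,b)" "(a,b) \<in> g" "(a,c) \<in> f" by (cases p) auto
    thus "p \<in> {p \<in> f. fst p \<in> Domain g}" using H by auto
  qed
qed

lemma f_xi_closed: "f_closed mult meet xi delta (f_xi mult meet xi delta X)"
  unfolding f_closed_def
proof (intro allI impI)
  fix x y t z u v
  assume A: "(u, v) \<in> xi \<and> dstar delta (rmul mult (meet u v) x) y \<and>
        sl_le meet (rmul mult (rmul mult (meet u v) x) y) (rmul mult z t) \<and>
        u \<in> f_xi mult meet xi delta X \<and> rmul mult v x \<in> f_xi mult meet xi delta X"
  show "z \<in> f_xi mult meet xi delta X" unfolding f_xi_def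
  proof (rule InterI)
    fix H assume "H \<in> {H. f_closed mult meet xi delta H \<and> X \<subseteq> H}"
    hence H: "f_closed mult meet xi delta H" "u \<in> H" "rmul mult v x \<in> H"
      using A unfolding f_xi_def by auto
    thus "z \<in> H" using A unfolding f_closed_def by blast
  qed
qed

lemma f_xi_sub: "X \<subseteq> f_xi mult meet xi delta X"
  unfolding f_xi_def by blast

lemma f_xi_least: "f_closed mult meet xi delta H \<Longrightarrow> X \<subseteq> H \<Longrightarrow> f_xi mult meet xi delta X \<subseteq> H"
  unfolding f_xi_def by blast

lemma nec:
  assumes T: "transf_iso mult meet xi delta A Phi h"
  shows
      "((\<forall>x u v. (u, v) \<in> xi \<longrightarrow> (mult x u, mult x v) \<in> xi)
      \<and> (\<forall>x y. sl_le meet x y \<longrightarrow> (x, y) \<in> xi)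
      \<and> (\<forall>x y u. (x, y) \<in> delta \<longrightarrow> (mult u x, y) \<in> delta)
      \<and> (\<forall>x y z. mult x (meet y z) = meet (mult x y) (mult x z))
      \<and> (\<forall>x y u v. sl_le meet x y \<and> sl_le meet u v \<and> (y, v) \<in> xi \<longrightarrow> (u, x) \<in> xi)
      \<and> (\<forall>x y u. (x, y) \<in> xi \<longrightarrow> mult (meet x y) u = meet (mult x u) (mult y u))
      \<and> (\<forall>x y. meet x y \<in> f_xi mult meet xi delta {x} \<longrightarrow> sl_le meet x y)
      \<and> (\<forall>x y. meet x y \<in> f_xi mult meet xi delta {x, y} \<longrightarrow> (x, y) \<in> xi)
      \<and> (\<forall>x y. mult x y \<in> f_xi mult meet xi delta {x} \<longrightarrow> (x, y) \<in> delta))"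
proof -
  have bij: "bij_betw h UNIV Phi" and tr: "\<forall>f\<in>Phi. transformation A f"
    and hm: "\<And>x y. h (mult x y) = h x O h y"
    and hmt: "\<And>x y. h (meet x y) = h x \<inter> h y"
    and hxi0: "\<And>x y. (x, y) \<in> xi \<longleftrightarrow> semicompat (h x) (h y)"
    and hd0: "\<And>x y. (x, y) \<in> delta \<longleftrightarrow> semiadj (h x) (h y)"
    using T unfolding transf_iso_def by auto
  have inj: "inj h" using bij by (simp add: bij_betw_def)
  have sv: "\<And>x. single_valued (h x)"
    using bij tr unfolding bij_betw_def transformation_def by auto
  have sc: "\<And>x y. (x,y) \<in> xi \<longleftrightarrow> (\<forall>a b c. (a,b) \<in> h x \<longrightarrow> (a,c) \<in> h y \<longrightarrow> b = c)"
    by (simp add: hxi0 semicompat_sv[OF sv sv])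
  have sa: "\<And>x y. (x,y) \<in> delta \<longleftrightarrow> Range (h x) \<subseteq> Domain (h y)"
    using hd0 unfolding semiadj_def by blast
  have le: "\<And>x y. sl_le meet x y \<longleftrightarrow> h x \<subseteq> h y"
  proof -
    fix x y
    have "sl_le meet x y \<longleftrightarrow> h (meet x y) = h x" unfolding sl_le_def by (simp add: inj_eq[OF inj])
    thus "sl_le meet x y \<longleftrightarrow> h x \<subseteq> h y" using hmt by blast
  qed
  define hh where "hh = (\<lambda>ob. case ob of None \<Rightarrow> Id | Some b \<Rightarrow> h b)"
  have rm: "\<And>a x. h (rmul mult a x) = h a O hh x"
    by (case_tac x) (auto simp: hm hh_def)
  have ds: "\<And>a y. dstar delta a y \<longleftrightarrow> Range (h a) \<subseteq> Domain (hh y)"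
    by (case_tac y) (auto simp: sa hh_def)
  have clH: "f_closed mult meet xi delta {z. a \<in> Domain (h z)}" for a
    unfolding f_closed_def
  proof (intro allI impI, elim conjE)
    fix x y t z u v
    assume uv: "(u,v) \<in> xi" and d: "dstar delta (rmul mult (meet u v) x) y"
      and l: "sl_le meet (rmul mult (rmul mult (meet u v) x) y) (rmul mult z t)"
      and u: "u \<in> {z. a \<in> Domain (h z)}" and v: "rmul mult v x \<in> {z. a \<in> Domain (h z)}"
    from u obtain b where b: "(a,b) \<in> h u" by auto
    from v obtain b' c where b': "(a,b') \<in> h v" "(b',c) \<in> hh x" by (auto simp: rm)
    have "b = b'" using uv b b' unfolding sc by blast
    hence "(a,b) \<in> h (meet u v)" using b b' hmt by auto
    hence ac: "(a,c) \<in> h (rmul mult (meet u v) x)" using b' \<open>b = b'\<close> rm by auto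
    then obtain d' where "(c,d') \<in> hh y" using d ds by blast
    hence "(a,d') \<in> h (rmul mult (rmul mult (meet u v) x) y)" using ac rm by auto
    hence "(a,d') \<in> h z O hh t" using l le rm by blast
    thus "z \<in> {z. a \<in> Domain (h z)}" by auto
  qed
  have fsub: "\<And>a X. (\<forall>x\<in>X. a \<in> Domain (h x)) \<Longrightarrow> w \<in> f_xi mult meet xi delta X \<Longrightarrow> a \<in> Domain (h w)"
    for w using f_xi_least[OF clH] by blast
  show ?thesis
  proof (intro conjI allI impI)
    fix x u v assume uv: "(u,v) \<in> xi"
    show "(mult x u, mult x v) \<in> xi" using uv sv[of x] unfolding sc hm single_valued_def by blast
  next
    fix x y assume "sl_le meet x y" thus "(x,y) \<in> xi" using sv[of y] unfolding le sc single_valued_def by blast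
  next
    fix x y u assume "(x,y) \<in> delta" thus "(mult u x, y) \<in> delta" unfolding sa hm by blast
  next
    fix x y z
    have "h (mult x (meet y z)) = h (meet (mult x y) (mult x z))"
      using sv[of x] unfolding hm hmt single_valued_def by blast
    thus "mult x (meet y z) = meet (mult x y) (mult x z)" using inj by (simp add: inj_eq)
  next
    fix x y u v assume "sl_le meet x y \<and> sl_le meet u v \<and> (y, v) \<in> xi"
    thus "(u,x) \<in> xi" unfolding le sc by blast
  next
    fix x y u assume "(x,y) \<in> xi"
    hence "h (mult (meet x y) u) = h (meet (mult x u) (mult y u))"
      unfolding sc hm hmt by blast
    thus "mult (meet x y) u = meet (mult x u) (mult y u)" using inj by (simp add: inj_eq)
  next
    fix x y assume m: "meet x y \<in> f_xi mult meet xi delta {x}"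
    show "sl_le meet x y" unfolding le
    proof
      fix p assume "p \<in> h x"
      then obtain a b where ab: "p = (a,b)" "(a,b) \<in> h x" by (cases p) auto
      have "a \<in> Domain (h (meet x y))" using fsub[OF _ m, of a] ab by blast
      then obtain c where "(a,c) \<in> h x" "(a,c) \<in> h y" using hmt by auto
      thus "p \<in> h y" using ab sv[of x] unfolding single_valued_def by blast
    qed
  next
    fix x y assume m: "meet x y \<in> f_xi mult meet xi delta {x, y}"
    show "(x,y) \<in> xi" unfolding sc
    proof (intro allI impI)
      fix a b c assume "(a,b) \<in> h x" "(a,c) \<in> h y"
      hence "a \<in> Domain (h (meet x y))" using fsub[OF _ m, of a] by blast
      then obtain d where "(a,d) \<in> h x" "(a,d) \<in> h y" using hmt by auto
      thus "b = c" using \<open>(a,b) \<in> h x\<close> \<open>(a,c) \<in> h y\<close> sv[of x] sv[of y]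
        unfolding single_valued_def by blast
    qed
  next
    fix x y assume m: "mult x y \<in> f_xi mult meet xi delta {x}"
    show "(x,y) \<in> delta" unfolding sa
    proof
      fix b assume "b \<in> Range (h x)"
      then obtain a where ab: "(a,b) \<in> h x" by auto
      hence "a \<in> Domain (h (mult x y))" using fsub[OF _ m, of a] by blast
      then obtain b' where "(a,b') \<in> h x" "b' \<in> Domain (h y)" using hm by auto
      thus "b \<in> Domain (h y)" using ab sv[of x] unfolding single_valued_def by blast
    qed
  qed
qed



fun lm :: "('a \<Rightarrow> 'a \<Rightarrow> 'a) \<Rightarrow> 'a option \<Rightarrow> 'a \<Rightarrow> 'a" where
  "lm mult None x = x"
| "lm mult (Some t) x = mult t x"

locale suff =
  fixes mult meet :: "'a \<Rightarrow> 'a \<Rightarrow> 'a" and xi delta :: "('a \<times> 'a) set"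
  assumes assoc: "\<And>x y z. mult (mult x y) z = mult x (mult y z)"
    and massoc: "\<And>x y z. meet (meet x y) z = meet x (meet y z)"
    and mcomm: "\<And>x y. meet x y = meet y x"
    and midem: "\<And>x. meet x x = x"
    and C1: "\<And>x u v. (u, v) \<in> xi \<Longrightarrow> (mult x u, mult x v) \<in> xi"
    and C2: "\<And>x y. sl_le meet x y \<Longrightarrow> (x, y) \<in> xi"
    and C3: "\<And>x y u. (x, y) \<in> delta \<Longrightarrow> (mult u x, y) \<in> delta"
    and C4: "\<And>x y z. mult x (meet y z) = meet (mult x y) (mult x z)"
    and C5: "\<And>x y u v. sl_le meet x y \<Longrightarrow> sl_le meet u v \<Longrightarrow> (y, v) \<in> xi \<Longrightarrow> (u, x) \<in> xi"
    and C6: "\<And>x y u. (x, y) \<in> xi \<Longrightarrow> mult (meet x y) u = meet (mult x u) (mult y u)"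
    and C7: "\<And>x y. meet x y \<in> f_xi mult meet xi delta {x} \<Longrightarrow> sl_le meet x y"
    and C8: "\<And>x y. meet x y \<in> f_xi mult meet xi delta {x, y} \<Longrightarrow> (x, y) \<in> xi"
    and C9: "\<And>x y. mult x y \<in> f_xi mult meet xi delta {x} \<Longrightarrow> (x, y) \<in> delta"
begin

abbreviation cl where "cl H \<equiv> f_closed mult meet xi delta H"

lemma mlc: "meet x (meet y z) = meet y (meet x z)"
  by (metis massoc mcomm)
lemma mabs: "meet x (meet x y) = meet x y"
  by (metis massoc midem)
lemmas mac = massoc mcomm mlc midem mabs

lemma clD: "cl H \<Longrightarrow> (u,v)\<in>xi \<Longrightarrow> dstar delta (rmul mult (meet u v) x) y
  \<Longrightarrow> sl_le meet (rmul mult (rmul mult (meet u v) x) y) (rmul mult z t) \<Longrightarrow> u\<in>H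
  \<Longrightarrow> rmul mult v x \<in> H \<Longrightarrow> z \<in> H"
  unfolding f_closed_def by blast

lemma refl_xi: "(u,u) \<in> xi" using C2 midem by (simp add: sl_le_def)

lemma L1: "cl H \<Longrightarrow> u \<in> H \<Longrightarrow> meet u z = u \<Longrightarrow> z \<in> H"
  using clD[of H u u None None z None] refl_xi by (simp add: sl_le_def midem)

lemma L2: "cl H \<Longrightarrow> mult z t \<in> H \<Longrightarrow> z \<in> H"
  using clD[of H "mult z t" "mult z t" None None z "Some t"] refl_xi by (simp add: sl_le_def midem)

lemma L3: "cl H \<Longrightarrow> (u,v) \<in> xi \<Longrightarrow> u \<in> H \<Longrightarrow> v \<in> H \<Longrightarrow> meet u v \<in> H"
  using clD[of H u v None None "meet u v" None] by (simp add: sl_le_def midem)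

lemma L4: "cl H \<Longrightarrow> u \<in> H \<Longrightarrow> (u,y) \<in> delta \<Longrightarrow> mult u y \<in> H"
  using clD[of H u u None "Some y" "mult u y" None] refl_xi by (simp add: sl_le_def midem)

lemma L5: "cl H \<Longrightarrow> (u,v) \<in> xi \<Longrightarrow> u \<in> H \<Longrightarrow> mult v x \<in> H \<Longrightarrow> mult (meet u v) x \<in> H"
  using clD[of H u v "Some x" None "mult (meet u v) x" None] by (simp add: sl_le_def midem)

lemma rmono: "meet a b = a \<Longrightarrow> meet (mult a c) (mult b c) = mult a c"
  using C6[of a b c] C2[of a b] by (simp add: sl_le_def)

lemma L1m: "cl H \<Longrightarrow> meet u z \<in> H \<Longrightarrow> u \<in> H"
  using L1[of H "meet u z" u] by (simp add: mac)

lemma eqv_trans: "cl H \<Longrightarrow> meet s t \<in> H \<Longrightarrow> meet t r \<in> H \<Longrightarrow> meet s r \<in> H"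
proof -
  assume H: "cl H" "meet s t \<in> H" "meet t r \<in> H"
  have "(meet t r, meet s t) \<in> xi"
    using C5[of "meet s t" t "meet t r" t] refl_xi by (simp add: sl_le_def mac)
  hence "meet (meet t r) (meet s t) \<in> H" using L3 H by blast
  thus ?thesis using L1[OF H(1), of _ "meet s r"] by (metis mac)
qed

lemma wd: "cl H \<Longrightarrow> meet s t \<in> H \<Longrightarrow> mult s x \<in> H \<Longrightarrow> mult t x \<in> H \<and> meet (mult s x) (mult t x) \<in> H"
proof -
  assume H: "cl H" "meet s t \<in> H" "mult s x \<in> H"
  have "(meet s t, s) \<in> xi" using C2 by (simp add: sl_le_def mac)
  hence m: "mult (meet s t) x \<in> H" using L5[OF H(1) _ H(2) H(3)] by (simp add: mac)
  have a: "meet (mult (meet s t) x) (mult t x) = mult (meet s t) x" by (rule rmono) (simp add: mac)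
  have b: "meet (mult (meet s t) x) (mult s x) = mult (meet s t) x" by (rule rmono) (simp add: mac)
  have c: "meet (mult (meet s t) x) (meet (mult s x) (mult t x)) = mult (meet s t) x"
    using a b by (metis massoc)
  show ?thesis using L1[OF H(1) m] a c by blast
qed

definition hp :: "'a set \<Rightarrow> 'a option set" where "hp H = insert None (Some ` H)"
definition cls :: "'a set \<Rightarrow> 'a \<Rightarrow> 'a set" where "cls H t = {s. meet s t \<in> H}"
fun pt :: "'a set \<Rightarrow> 'a option \<Rightarrow> 'a option set set" where
  "pt H None = {hp H}"
| "pt H (Some t) = {hp H, Some ` cls H t}"

lemma hp_inj: "hp H = hp H' \<Longrightarrow> H = H'"
  proof -
  assume "hp H = hp H'"
  hence "\<And>x. Some x \<in> hp H \<longleftrightarrow> Some x \<in> hp H'" by simp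
  thus "H = H'" unfolding hp_def by auto
qed

lemma n1: "None \<in> hp H" unfolding hp_def by simp
lemma n2: "None \<notin> Some ` X" by auto

lemma ptE:
  assumes e: "pt H a = pt H' b" and va: "set_option a \<subseteq> H" and vb: "set_option b \<subseteq> H'"
  shows "H = H' \<and> ((a = None \<and> b = None) \<or> (\<exists>s t. a = Some s \<and> b = Some t \<and> meet s t \<in> H))"
proof -
  have hh: "H = H'"
  proof -
    have "hp H \<in> pt H' b" using e[symmetric] by (cases a) auto
    hence "hp H = hp H'" using n1[of H] n2 by (cases b) auto
    thus ?thesis by (rule hp_inj)
  qed
  show ?thesis
  proof (cases a; cases b)
    assume "a = None" "b = None" thus ?thesis using hh by auto
  next
    fix t assume "a = None" "b = Some t"
    hence "Some ` cls H' t \<in> pt H a" using e by simp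
    hence "Some ` cls H' t = hp H" using \<open>a = None\<close> by simp
    thus ?thesis using n1[of H] n2 by metis
  next
    fix s assume "a = Some s" "b = None"
    hence "Some ` cls H s \<in> pt H' b" using e[symmetric] by simp
    hence "Some ` cls H s = hp H'" using \<open>b = None\<close> by simp
    thus ?thesis using n1[of H'] n2 by metis
  next
    fix s t assume as: "a = Some s" "b = Some t"
    hence "Some ` cls H s \<in> pt H' b" using e[symmetric] by simp
    hence "Some ` cls H s = Some ` cls H' t" using as n1[of H'] n2 by auto
    hence "cls H s = cls H t" using hh by (simp add: inj_image_eq_iff)
    moreover have "s \<in> cls H s" using va as by (simp add: cls_def midem)
    ultimately have "meet s t \<in> H" by (simp add: cls_def)
    thus ?thesis using as hh by auto
  qed
qed

lemma ptI: "cl H \<Longrightarrow> meet s t \<in> H \<Longrightarrow> pt H (Some s) = pt H (Some t)"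
proof -
  assume H: "cl H" "meet s t \<in> H"
  have "cls H s = cls H t"
  proof (intro set_eqI iffI)
    fix r assume "r \<in> cls H s" thus "r \<in> cls H t" using eqv_trans[OF H(1) _ H(2)] by (simp add: cls_def)
  next
    fix r assume "r \<in> cls H t"
    moreover have "meet t s \<in> H" using H(2) by (simp add: mcomm)
    ultimately show "r \<in> cls H s" using eqv_trans[OF H(1)] by (simp add: cls_def)
  qed
  thus ?thesis by simp
qed

definition hr :: "'a \<Rightarrow> ('a option set set \<times> 'a option set set) set" where
  "hr x = {(pt H a, pt H (Some (lm mult a x))) | H a. cl H \<and> set_option a \<subseteq> H \<and> lm mult a x \<in> H}"

definition AA :: "'a option set set set" where
  "AA = {pt H a | H a. cl H \<and> set_option a \<subseteq> H}"

lemma hpair: "(p,q) \<in> hr x \<Longrightarrow> \<exists>H a. cl H \<and> set_option a \<subseteq> H \<and> p = pt H a"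
  unfolding hr_def by blast

lemma hmem:
  assumes H: "cl H" "set_option a \<subseteq> H"
  shows "(pt H a, q) \<in> hr x \<longleftrightarrow> lm mult a x \<in> H \<and> q = pt H (Some (lm mult a x))"
proof
  assume "lm mult a x \<in> H \<and> q = pt H (Some (lm mult a x))"
  thus "(pt H a, q) \<in> hr x" using H unfolding hr_def by blast
next
  assume "(pt H a, q) \<in> hr x"
  then obtain H' b where b: "pt H a = pt H' b" "cl H'" "set_option b \<subseteq> H'" "lm mult b x \<in> H'"
    "q = pt H' (Some (lm mult b x))" unfolding hr_def by blast
  from ptE[OF b(1) H(2) b(3)] have "H = H'" and
    c: "(a = None \<and> b = None) \<or> (\<exists>s t. a = Some s \<and> b = Some t \<and> meet s t \<in> H)" by auto
  from c show "lm mult a x \<in> H \<and> q = pt H (Some (lm mult a x))"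
  proof
    assume "a = None \<and> b = None" thus ?thesis using b \<open>H = H'\<close> by auto
  next
    assume "\<exists>s t. a = Some s \<and> b = Some t \<and> meet s t \<in> H"
    then obtain s t where st: "a = Some s" "b = Some t" "meet s t \<in> H" by blast
    have "meet t s \<in> H" using st by (simp add: mcomm)
    hence w: "mult s x \<in> H \<and> meet (mult t x) (mult s x) \<in> H"
      using wd[OF H(1)] b(4) st \<open>H = H'\<close> by simp
    hence "pt H (Some (mult t x)) = pt H (Some (mult s x))" using ptI H(1) by blast
    thus ?thesis using w st b \<open>H = H'\<close> by simp
  qed
qed

lemma lm_mult: "lm mult a (mult x y) = mult (lm mult a x) y"
  by (cases a) (simp_all add: assoc)
lemma lm_meet: "lm mult a (meet x y) = meet (lm mult a x) (lm mult a y)"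
  by (cases a) (simp_all add: C4)

lemma hr_mult: "hr (mult x y) = hr x O hr y"
proof (intro equalityI subrelI)
  fix p q assume pq: "(p,q) \<in> hr (mult x y)"
  then obtain H a where H: "cl H" "set_option a \<subseteq> H" "p = pt H a" using hpair by blast
  hence m: "mult (lm mult a x) y \<in> H" "q = pt H (Some (mult (lm mult a x) y))"
    using pq hmem lm_mult by auto
  hence "lm mult a x \<in> H" using L2 H by blast
  hence "(p, pt H (Some (lm mult a x))) \<in> hr x" using H hmem by auto
  moreover have "(pt H (Some (lm mult a x)), q) \<in> hr y"
    using hmem[OF H(1), of "Some (lm mult a x)"] m \<open>lm mult a x \<in> H\<close> by auto
  ultimately show "(p,q) \<in> hr x O hr y" by blast
next
  fix p q assume "(p,q) \<in> hr x O hr y"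
  then obtain r where pr: "(p,r) \<in> hr x" and rq: "(r,q) \<in> hr y" by blast
  then obtain H a where H: "cl H" "set_option a \<subseteq> H" "p = pt H a" using hpair by blast
  hence r: "lm mult a x \<in> H" "r = pt H (Some (lm mult a x))" using pr hmem by auto
  hence "mult (lm mult a x) y \<in> H" "q = pt H (Some (mult (lm mult a x) y))"
    using rq hmem[OF H(1), of "Some (lm mult a x)"] by auto
  thus "(p,q) \<in> hr (mult x y)" using H hmem lm_mult by auto
qed

lemma hr_meet: "hr (meet x y) = hr x \<inter> hr y"
proof (intro equalityI subrelI)
  fix p q assume pq: "(p,q) \<in> hr (meet x y)"
  then obtain H a where H: "cl H" "set_option a \<subseteq> H" "p = pt H a" using hpair by blast
  hence m: "meet (lm mult a x) (lm mult a y) \<in> H" "q = pt H (Some (meet (lm mult a x) (lm mult a y)))"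
    using pq hmem lm_meet by auto
  have X: "lm mult a x \<in> H" using m L1m H by blast
  have Y: "lm mult a y \<in> H" using m L1m H by (metis mcomm)
  have "pt H (Some (meet (lm mult a x) (lm mult a y))) = pt H (Some (lm mult a x))"
    using ptI[OF H(1)] m by (simp add: mac)
  moreover have "pt H (Some (meet (lm mult a x) (lm mult a y))) = pt H (Some (lm mult a y))"
    using ptI[OF H(1)] m by (simp add: mac)
  ultimately show "(p,q) \<in> hr x \<inter> hr y" using H hmem X Y m by auto
next
  fix p q assume pq: "(p,q) \<in> hr x \<inter> hr y"
  then obtain H a where H: "cl H" "set_option a \<subseteq> H" "p = pt H a" using hpair by blast
  hence X: "lm mult a x \<in> H" "q = pt H (Some (lm mult a x))"
    and Y: "lm mult a y \<in> H" "q = pt H (Some (lm mult a y))" using pq hmem by auto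
  have "meet (lm mult a x) (lm mult a y) \<in> H"
    using ptE[of H "Some (lm mult a x)" H "Some (lm mult a y)"] X Y by auto
  moreover have "pt H (Some (meet (lm mult a x) (lm mult a y))) = pt H (Some (lm mult a x))"
    using ptI[OF H(1)] calculation by (simp add: mac)
  ultimately show "(p,q) \<in> hr (meet x y)" using H hmem lm_meet X by auto
qed

lemma sv_hr: "single_valued (hr x)"
proof (rule single_valuedI)
  fix p q q' assume "(p,q) \<in> hr x" "(p,q') \<in> hr x"
  moreover obtain H a where H: "cl H" "set_option a \<subseteq> H" "p = pt H a" using hpair calculation by blast
  ultimately show "q = q'" using hmem by auto
qed

lemma cl_UNIV: "cl UNIV" unfolding f_closed_def by simp

lemma xi_iff: "(x,y) \<in> xi \<longleftrightarrow> semicompat (hr x) (hr y)"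
  unfolding semicompat_sv[OF sv_hr sv_hr]
proof (intro iffI allI impI)
  fix p q q' assume xy: "(x,y) \<in> xi" and pq: "(p,q) \<in> hr x" and pq': "(p,q') \<in> hr y"
  then obtain H a where H: "cl H" "set_option a \<subseteq> H" "p = pt H a" using hpair by blast
  hence X: "lm mult a x \<in> H" "q = pt H (Some (lm mult a x))"
    and Y: "lm mult a y \<in> H" "q' = pt H (Some (lm mult a y))" using pq pq' hmem by auto
  have "(lm mult a x, lm mult a y) \<in> xi" using xy C1 by (cases a) auto
  hence "meet (lm mult a x) (lm mult a y) \<in> H" using L3 H X Y by blast
  thus "q = q'" using ptI[OF H(1)] X(2) Y(2) by simp
next
  assume S: "\<forall>p q q'. (p,q) \<in> hr x \<longrightarrow> (p,q') \<in> hr y \<longrightarrow> q = q'"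
  define H where "H = f_xi mult meet xi delta {x, y}"
  have H: "cl H" "x \<in> H" "y \<in> H" unfolding H_def using f_xi_closed f_xi_sub[of "{x,y}"] by auto
  have "(pt H None, pt H (Some x)) \<in> hr x" "(pt H None, pt H (Some y)) \<in> hr y"
    using hmem[OF H(1), of None] H by auto
  hence "pt H (Some x) = pt H (Some y)" using S by metis
  hence "meet x y \<in> H" using ptE[of H "Some x" H "Some y"] H by auto
  thus "(x,y) \<in> xi" using C8 H_def by blast
qed

lemma delta_iff: "(x,y) \<in> delta \<longleftrightarrow> semiadj (hr x) (hr y)"
  unfolding semiadj_def
proof
  assume xy: "(x,y) \<in> delta"
  show "Range (hr x) \<subseteq> Domain (hr y)"
  proof
    fix q assume "q \<in> Range (hr x)"
    then obtain p where pq: "(p,q) \<in> hr x" by blast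
    then obtain H a where H: "cl H" "set_option a \<subseteq> H" "p = pt H a" using hpair by blast
    hence X: "lm mult a x \<in> H" "q = pt H (Some (lm mult a x))" using pq hmem by auto
    have "(lm mult a x, y) \<in> delta" using xy C3 by (cases a) auto
    hence "mult (lm mult a x) y \<in> H" using L4 H X by blast
    thus "q \<in> Domain (hr y)" using hmem[OF H(1), of "Some (lm mult a x)"] X by auto
  qed
next
  assume S: "Range (hr x) \<subseteq> Domain (hr y)"
  define H where "H = f_xi mult meet xi delta {x}"
  have H: "cl H" "x \<in> H" unfolding H_def using f_xi_closed f_xi_sub[of "{x}"] by auto
  have "(pt H None, pt H (Some x)) \<in> hr x" using hmem[OF H(1), of None] H by auto
  hence "pt H (Some x) \<in> Domain (hr y)" using S by blast
  hence "mult x y \<in> H" using hmem[OF H(1), of "Some x"] H by auto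
  thus "(x,y) \<in> delta" using C9 H_def by blast
qed

lemma hr_le: "hr x = hr y \<Longrightarrow> meet x y = x"
proof -
  assume e: "hr x = hr y"
  define H where "H = f_xi mult meet xi delta {x}"
  have H: "cl H" "x \<in> H" unfolding H_def using f_xi_closed f_xi_sub[of "{x}"] by auto
  have "(pt H None, pt H (Some x)) \<in> hr x" using hmem[OF H(1), of None] H by simp
  hence "(pt H None, pt H (Some x)) \<in> hr (meet x y)" using e hr_meet by simp
  hence "meet x y \<in> H" using hmem[OF H(1), of None] by simp
  thus ?thesis using C7 H_def by (simp add: sl_le_def)
qed

lemma hr_inj: "inj hr"
proof (rule injI)
  fix x y assume "hr x = hr y"
  hence "meet x y = x" "meet y x = y" using hr_le by metis+
  thus "x = y" by (metis mcomm)
qed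

lemma exists_rep: "\<exists>(A :: 'a option set set set) Phi h. transf_iso mult meet xi delta A Phi h"
proof (intro exI)
  show "transf_iso mult meet xi delta AA (range hr) hr"
    unfolding transf_iso_def
  proof (intro conjI ballI allI)
    show "AA \<noteq> {}" unfolding AA_def using cl_UNIV by auto
  next
    fix f assume "f \<in> range hr"
    then obtain x where f: "f = hr x" by blast
    have "hr x \<subseteq> AA \<times> AA" unfolding hr_def AA_def by blast
    thus "transformation AA f" unfolding transformation_def using f sv_hr by auto
  next
    fix f g assume "f \<in> range hr" "g \<in> range hr"
    then obtain x y where "f = hr x" "g = hr y" by blast
    thus "f O g \<in> range hr" using hr_mult[of x y, symmetric] by simp
  next
    fix f g assume "f \<in> range hr" "g \<in> range hr"
    then obtain x y where "f = hr x" "g = hr y" by blast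
    thus "f \<inter> g \<in> range hr" using hr_meet[of x y, symmetric] by simp
  next
    show "bij_betw hr UNIV (range hr)" using hr_inj by (simp add: bij_betw_def)
  qed (simp_all add: hr_mult hr_meet xi_iff delta_iff)
qed

end

lemma exists_rep_gen:
  fixes mult meet :: "'a \<Rightarrow> 'a \<Rightarrow> 'a"
  assumes a1: "\<And>x y z. mult (mult x y) z = mult x (mult y z)"
    and a2: "\<And>x y z. meet (meet x y) z = meet x (meet y z)"
    and a3: "\<And>x y. meet x y = meet y x"
    and a4: "\<And>x. meet x x = x"
    and C: "((\<forall>x u v. (u, v) \<in> xi \<longrightarrow> (mult x u, mult x v) \<in> xi)
      \<and> (\<forall>x y. sl_le meet x y \<longrightarrow> (x, y) \<in> xi)
      \<and> (\<forall>x y u. (x, y) \<in> delta \<longrightarrow> (mult u x, y) \<in> delta)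
      \<and> (\<forall>x y z. mult x (meet y z) = meet (mult x y) (mult x z))
      \<and> (\<forall>x y u v. sl_le meet x y \<and> sl_le meet u v \<and> (y, v) \<in> xi \<longrightarrow> (u, x) \<in> xi)
      \<and> (\<forall>x y u. (x, y) \<in> xi \<longrightarrow> mult (meet x y) u = meet (mult x u) (mult y u))
      \<and> (\<forall>x y. meet x y \<in> f_xi mult meet xi delta {x} \<longrightarrow> sl_le meet x y)
      \<and> (\<forall>x y. meet x y \<in> f_xi mult meet xi delta {x, y} \<longrightarrow> (x, y) \<in> xi)
      \<and> (\<forall>x y. mult x y \<in> f_xi mult meet xi delta {x} \<longrightarrow> (x, y) \<in> delta))"
  shows "\<exists>(A :: 'a option set set set) Phi h. transf_iso mult meet xi delta A Phi h"
proof -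
  have c1: "\<And>x u v. (u, v) \<in> xi \<Longrightarrow> (mult x u, mult x v) \<in> xi" using C[THEN conjunct1] by blast
  have c2: "\<And>x y. sl_le meet x y \<Longrightarrow> (x, y) \<in> xi" using C[THEN conjunct2, THEN conjunct1] by blast
  have c3: "\<And>x y u. (x, y) \<in> delta \<Longrightarrow> (mult u x, y) \<in> delta" using C[THEN conjunct2, THEN conjunct2, THEN conjunct1] by blast
  have c4: "\<And>x y z. mult x (meet y z) = meet (mult x y) (mult x z)" using C[THEN conjunct2, THEN conjunct2, THEN conjunct2, THEN conjunct1] by blast
  have c5: "\<And>x y u v. sl_le meet x y \<Longrightarrow> sl_le meet u v \<Longrightarrow> (y, v) \<in> xi \<Longrightarrow> (u, x) \<in> xi" using C[THEN conjunct2, THEN conjunct2, THEN conjunct2, THEN conjunct2, THEN conjunct1] by blast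
  have c6: "\<And>x y u. (x, y) \<in> xi \<Longrightarrow> mult (meet x y) u = meet (mult x u) (mult y u)" using C[THEN conjunct2, THEN conjunct2, THEN conjunct2, THEN conjunct2, THEN conjunct2, THEN conjunct1] by blast
  have c7: "\<And>x y. meet x y \<in> f_xi mult meet xi delta {x} \<Longrightarrow> sl_le meet x y" using C[THEN conjunct2, THEN conjunct2, THEN conjunct2, THEN conjunct2, THEN conjunct2, THEN conjunct2, THEN conjunct1] by blast
  have c8: "\<And>x y. meet x y \<in> f_xi mult meet xi delta {x, y} \<Longrightarrow> (x, y) \<in> xi" using C[THEN conjunct2, THEN conjunct2, THEN conjunct2, THEN conjunct2, THEN conjunct2, THEN conjunct2, THEN conjunct2, THEN conjunct1] by blast
  have c9: "\<And>x y. mult x y \<in> f_xi mult meet xi delta {x} \<Longrightarrow> (x, y) \<in> delta" using C[THEN conjunct2, THEN conjunct2, THEN conjunct2, THEN conjunct2, THEN conjunct2, THEN conjunct2, THEN conjunct2, THEN conjunct2] by blast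
  have S: "suff mult meet xi delta"
    by (rule suff.intro[OF a1 a2 a3 a4 c1 c2 c3 c4 c5 c6 c7 c8 c9])
  show ?thesis using suff.exists_rep[OF S] by blast
qed

theorem theorem1:
  fixes mult meet :: "'a \<Rightarrow> 'a \<Rightarrow> 'a"
    and xi delta :: "('a \<times> 'a) set"
  assumes semigroup: "\<And>x y z. mult (mult x y) z = mult x (mult y z)"
    and meet_assoc: "\<And>x y z. meet (meet x y) z = meet x (meet y z)"
    and meet_comm: "\<And>x y. meet x y = meet y x"
    and meet_idem: "\<And>x. meet x x = x"
  shows
   "((\<exists>(A :: 'a option set set set) Phi h. transf_iso mult meet xi delta A Phi h)
     \<longleftrightarrow>
     ((\<forall>x u v. (u, v) \<in> xi \<longrightarrow> (mult x u, mult x v) \<in> xi)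
      \<and> (\<forall>x y. sl_le meet x y \<longrightarrow> (x, y) \<in> xi)
      \<and> (\<forall>x y u. (x, y) \<in> delta \<longrightarrow> (mult u x, y) \<in> delta)
      \<and> (\<forall>x y z. mult x (meet y z) = meet (mult x y) (mult x z))
      \<and> (\<forall>x y u v. sl_le meet x y \<and> sl_le meet u v \<and> (y, v) \<in> xi \<longrightarrow> (u, x) \<in> xi)
      \<and> (\<forall>x y u. (x, y) \<in> xi \<longrightarrow> mult (meet x y) u = meet (mult x u) (mult y u))
      \<and> (\<forall>x y. meet x y \<in> f_xi mult meet xi delta {x} \<longrightarrow> sl_le meet x y)
      \<and> (\<forall>x y. meet x y \<in> f_xi mult meet xi delta {x, y} \<longrightarrow> (x, y) \<in> xi)
      \<and> (\<forall>x y. mult x y \<in> f_xi mult meet xi delta {x} \<longrightarrow> (x, y) \<in> delta)))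
    \<and> (\<forall>(A :: 'b set) Phi h. transf_iso mult meet xi delta A Phi h \<longrightarrow>
      ((\<forall>x u v. (u, v) \<in> xi \<longrightarrow> (mult x u, mult x v) \<in> xi)
      \<and> (\<forall>x y. sl_le meet x y \<longrightarrow> (x, y) \<in> xi)
      \<and> (\<forall>x y u. (x, y) \<in> delta \<longrightarrow> (mult u x, y) \<in> delta)
      \<and> (\<forall>x y z. mult x (meet y z) = meet (mult x y) (mult x z))
      \<and> (\<forall>x y u v. sl_le meet x y \<and> sl_le meet u v \<and> (y, v) \<in> xi \<longrightarrow> (u, x) \<in> xi)
      \<and> (\<forall>x y u. (x, y) \<in> xi \<longrightarrow> mult (meet x y) u = meet (mult x u) (mult y u))
      \<and> (\<forall>x y. meet x y \<in> f_xi mult meet xi delta {x} \<longrightarrow> sl_le meet x y)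
      \<and> (\<forall>x y. meet x y \<in> f_xi mult meet xi delta {x, y} \<longrightarrow> (x, y) \<in> xi)
      \<and> (\<forall>x y. mult x y \<in> f_xi mult meet xi delta {x} \<longrightarrow> (x, y) \<in> delta)))"
  apply (rule conjI)
   apply (rule iffI)
    apply (elim exE)
    apply (erule nec)
   apply (erule exists_rep_gen[OF semigroup meet_assoc meet_comm meet_idem])
  apply (intro allI impI)
  apply (erule nec)
  done

end
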